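(* Let $k_{cl}(n)$ be the largest $k$ such that Maker has a winning strategy in the $k$-clique game on $K_n$. Let $TT_k$ be the transitive tournament on $\{u_1,\dots,u_k\}$, with $u_i\to u_j$ for all $i<j$. Then Maker has a winning strategy in the $k$-tournament game $\mathcal{T}(k,n)$ in which the fixed tournament is $TT_k$, for $k=k_{cl}(n)$.
   Context: In the $k$-clique game on $K_n$, Maker (moving first) and Breaker alternately claim one unclaimed edge of $K_n$; Maker wins if her graph contains a clique on $k$ vertices. In the $k$-tournament game, each player additionally chooses an orientation for each claimed edge, and Maker wins if her digraph contains a copy of the fixed tournament. *)

theory Defs
  imports Main
begin

text \<open>A general Maker-Breaker game in which each move is an element of the set Mv of
  possible moves; und maps a move to the board element (here: an edge of K_n) it claims.
  W is Maker's winning condition on the set of her moves.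
  maker_wins Mv und W M B: from the position where Maker has made the moves M,
  Breaker the moves B, and Maker is to move, Maker has a winning strategy.
  If the board is exhausted without W holding, Breaker wins.\<close>

definition avail :: "'m set \<Rightarrow> ('m \<Rightarrow> 'e) \<Rightarrow> 'm set \<Rightarrow> 'm set \<Rightarrow> 'm set" where
  "avail Mv und M B = {a \<in> Mv. und a \<notin> und ` (M \<union> B)}"

inductive maker_wins :: "'m set \<Rightarrow> ('m \<Rightarrow> 'e) \<Rightarrow> ('m set \<Rightarrow> bool) \<Rightarrow> 'm set \<Rightarrow> 'm set \<Rightarrow> bool"
  for Mv und W where
  base: "W M \<Longrightarrow> maker_wins Mv und W M B"
| step: "a \<in> avail Mv und M B \<Longrightarrow>
     W (insert a M) \<or>
       (avail Mv und (insert a M) B \<noteq> {} \<and>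
        (\<forall>b \<in> avail Mv und (insert a M) B. maker_wins Mv und W (insert a M) (insert b B)))
     \<Longrightarrow> maker_wins Mv und W M B"

definition Kn_edges :: "nat \<Rightarrow> nat set set" where
  "Kn_edges n = {e. \<exists>u v. u < n \<and> v < n \<and> u \<noteq> v \<and> e = {u, v}}"

definition Kn_arcs :: "nat \<Rightarrow> (nat \<times> nat) set" where
  "Kn_arcs n = {(u, v). u < n \<and> v < n \<and> u \<noteq> v}"

definition has_clique :: "nat \<Rightarrow> nat \<Rightarrow> nat set set \<Rightarrow> bool" where
  "has_clique n k G \<longleftrightarrow> (\<exists>S \<subseteq> {..<n}. card S = k \<and>
      (\<forall>u \<in> S. \<forall>v \<in> S. u \<noteq> v \<longrightarrow> {u, v} \<in> G))"

definition maker_wins_clique :: "nat \<Rightarrow> nat \<Rightarrow> bool" where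
  "maker_wins_clique n k = maker_wins (Kn_edges n) id (has_clique n k) {} {}"

definition k_cl :: "nat \<Rightarrow> nat" where
  "k_cl n = (GREATEST k. maker_wins_clique n k)"

definition has_TT :: "nat \<Rightarrow> nat \<Rightarrow> (nat \<times> nat) set \<Rightarrow> bool" where
  "has_TT n k D \<longleftrightarrow> (\<exists>f. inj_on f {..<k} \<and> f ` {..<k} \<subseteq> {..<n} \<and>
      (\<forall>i j. i < j \<and> j < k \<longrightarrow> (f i, f j) \<in> D))"

text \<open>The k-tournament game on K_n with target TT_k: each move claims an unclaimed edge
  together with an orientation, i.e. an arc whose underlying edge is unclaimed.\<close>
definition maker_wins_TT :: "nat \<Rightarrow> nat \<Rightarrow> bool" where
  "maker_wins_TT n k = maker_wins (Kn_arcs n) (\<lambda>(u, v). {u, v}) (has_TT n k) {} {}"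

end

theory Submission
  imports Defs
begin

lemma mw_exists: "maker_wins Mv und W M B \<Longrightarrow> \<exists>M'. W M'"
  by (induction rule: maker_wins.induct) auto

lemma clique_le: "maker_wins_clique n k \<Longrightarrow> k \<le> n"
proof -
  assume "maker_wins_clique n k"
  then obtain G where "has_clique n k G" unfolding maker_wins_clique_def using mw_exists by blast
  then obtain S where "S \<subseteq> {..<n}" "card S = k" unfolding has_clique_def by blast
  thus "k \<le> n" using card_mono[of "{..<n}" S] by auto
qed

lemma clique0: "maker_wins_clique n 0"
  unfolding maker_wins_clique_def
  by (rule maker_wins.base) (auto simp: has_clique_def intro!: exI[of _ "{}"])

lemma kcl: "maker_wins_clique n (k_cl n)"
  unfolding k_cl_def
  by (rule GreatestI_nat[of _ 0 n]) (auto simp: clique0 clique_le)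

abbreviation und :: "nat \<times> nat \<Rightarrow> nat set" where "und \<equiv> (\<lambda>(u, v). {u, v})"

lemma base_TT:
  assumes "has_clique n k M" "und ` M' = M" "\<forall>(x,y)\<in>M'. x < y"
  shows "has_TT n k M'"
proof -
  obtain S where S: "S \<subseteq> {..<n}" "card S = k" "\<forall>u \<in> S. \<forall>v \<in> S. u \<noteq> v \<longrightarrow> {u, v} \<in> M"
    using assms(1) unfolding has_clique_def by blast
  have fin: "finite S" using S(1) finite_subset by blast
  define xs where "xs = sorted_list_of_set S"
  have len: "length xs = k" using S fin by (simp add: xs_def)
  have setxs: "set xs = S" using fin by (simp add: xs_def)
  have dist: "distinct xs" by (simp add: xs_def)
  have sw: "sorted_wrt (<) xs" by (simp add: xs_def)
  define f where "f = (\<lambda>i. xs ! i)"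
  show ?thesis unfolding has_TT_def
  proof (intro exI[of _ f] conjI allI impI)
    show "inj_on f {..<k}" unfolding f_def using dist len
      by (simp add: inj_on_def nth_eq_iff_index_eq)
    show "f ` {..<k} \<subseteq> {..<n}" unfolding f_def using len setxs S(1) by auto
    fix i j assume ij: "i < j \<and> j < k"
    have lt: "f i < f j" unfolding f_def using sw ij len by (simp add: sorted_wrt_iff_nth_less)
    have "f i \<in> S" "f j \<in> S" unfolding f_def using ij len setxs by auto
    hence "{f i, f j} \<in> M" using S(3) lt by auto
    then obtain x y where xy: "(x,y) \<in> M'" "{x,y} = {f i, f j}" using assms(2) by auto
    have "x < y" using xy(1) assms(3) by auto
    hence "x = f i \<and> y = f j" using xy(2) lt by (auto simp: doubleton_eq_iff)
    thus "(f i, f j) \<in> M'" using xy(1) by simp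
  qed
qed

lemma transfer:
  assumes "maker_wins (Kn_edges n) id (has_clique n k) M B"
  shows "und ` M' = M \<Longrightarrow> und ` B' = B \<Longrightarrow> \<forall>(x,y)\<in>M'. x < y \<Longrightarrow>
     maker_wins (Kn_arcs n) und (has_TT n k) M' B'"
  using assms
proof (induction arbitrary: M' B' rule: maker_wins.induct)
  case (base M B)
  then show ?case by (intro maker_wins.base base_TT) auto
next
  case (step a M B)
  from step.hyps(1) obtain u v where uv: "u < n" "v < n" "u < v" "a = {u,v}" "a \<notin> M" "a \<notin> B"
    unfolding avail_def Kn_edges_def
    by (auto simp: doubleton_eq_iff) (metis insert_commute linorder_neqE_nat)
  define a' where "a' = (u,v)"
  have a'av: "a' \<in> avail (Kn_arcs n) und M' B'"
    using uv step.prems unfolding avail_def Kn_arcs_def a'_def by auto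
  have M'': "und ` insert a' M' = insert a M" "\<forall>(x,y)\<in>insert a' M'. x < y"
    using uv step.prems by (auto simp: a'_def)
  show ?case
  proof (rule maker_wins.step[OF a'av])
    show "has_TT n k (insert a' M') \<or>
       (avail (Kn_arcs n) und (insert a' M') B' \<noteq> {} \<and>
        (\<forall>b\<in>avail (Kn_arcs n) und (insert a' M') B'. maker_wins (Kn_arcs n) und (has_TT n k) (insert a' M') (insert b B')))"
    proof (cases "has_clique n k (insert a M)")
      case True
      thus ?thesis using base_TT M'' by (metis (no_types, lifting))
    next
      case False
      have H: "avail (Kn_edges n) id (insert a M) B \<noteq> {} \<and>
        (\<forall>b\<in>avail (Kn_edges n) id (insert a M) B.
            maker_wins (Kn_edges n) id (has_clique n k) (insert a M) (insert b B) \<and>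
            (\<forall>X Y. und ` X = insert a M \<longrightarrow> und ` Y = insert b B \<longrightarrow> (\<forall>(x, y)\<in>X. x < y) \<longrightarrow>
              maker_wins (Kn_arcs n) und (has_TT n k) X Y))"
        using step.IH False by blast
      then obtain e where e: "e \<in> avail (Kn_edges n) id (insert a M) B" by blast
      then obtain x y where xy: "x < n" "y < n" "x \<noteq> y" "e = {x,y}" "e \<notin> insert a M" "e \<notin> B"
        unfolding avail_def Kn_edges_def by auto
      have u1: "und ` (insert a' M' \<union> B') = insert a M \<union> B"
        using M''(1) step.prems(2) by (metis image_Un)
      have "(x,y) \<in> Kn_arcs n" using xy unfolding Kn_arcs_def by simp
      moreover have "und (x,y) \<notin> und ` (insert a' M' \<union> B')"
        unfolding u1 using xy by simp
      ultimately have "(x,y) \<in> avail (Kn_arcs n) und (insert a' M') B'"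
        unfolding avail_def by blast
      hence ne: "avail (Kn_arcs n) und (insert a' M') B' \<noteq> {}" by blast
      have allb: "maker_wins (Kn_arcs n) und (has_TT n k) (insert a' M') (insert b B')"
        if b: "b \<in> avail (Kn_arcs n) und (insert a' M') B'" for b
      proof -
        obtain p q where pq: "b = (p,q)" by (cases b)
        have "und b \<in> Kn_edges n" using b unfolding avail_def Kn_arcs_def Kn_edges_def pq by auto
        moreover have "und b \<notin> insert a M \<union> B" using b unfolding avail_def u1[symmetric] by blast
        ultimately have "und b \<in> avail (Kn_edges n) id (insert a M) B"
          unfolding avail_def by simp
        moreover have "und ` insert b B' = insert (und b) B" using step.prems(2) by simp
        ultimately show ?thesis using H M'' by (metis (no_types, lifting))
      qed
      show ?thesis using ne allb by blast
    qed
  qed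
qed

theorem mainTheorem9:
  fixes n :: nat
  shows "maker_wins_TT n (k_cl n)"
  unfolding maker_wins_TT_def
  by (rule transfer[OF kcl[unfolded maker_wins_clique_def]]) auto

end
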